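(* Let $G$ be a finite simple connected regular graph with at least one edge, which is edge-reconstructable (so that $ern(G)$ is defined), is $2$-swappable, and all of whose edges are removal similar (i.e. $G-e\cong G-f$ for all $e,f\in E(G)$). Then $ern(G)\geq 3$.
   Context: All graphs are finite and simple. For a graph $G$ and $e\in E(G)$, the unlabeled graph $G-e$ is an edge-card of $G$; the edge-deck $\mathcal{ED}(G)$ is the multiset of all edge-cards $G-e$, $e\in E(G)$ (taken up to isomorphism). For a sub-multiset $S\subseteq\mathcal{ED}(G)$, a blocker of $S$ is a graph $H\not\cong G$ such that $S\subseteq\mathcal{ED}(H)$ as multisets. $G$ is reconstructable from $S$ if $S$ has no blocker; $G$ is edge-reconstructable if it is reconstructable from $\mathcal{ED}(G)$. For such $G$, the edge reconstruction number $ern(G)$ is the minimum size of a sub-multiset $S\subseteq\mathcal{ED}(G)$ from which $G$ is reconstructable. For $A\subseteq E(G)$ and $B\subseteq E(\bar G)$, $G-A+B$ denotes the graph on $V(G)$ with edge set $(E(G)\setminus A)\cup B$. $G$ is $2$-swappable if for every $e\in E(G)$ there exist $A\subseteq E(G)$ and $B\subseteq E(\bar G)$ with $e\in A$, $|A|\leq 2$, and $G\cong G-A+B$. *)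

theory Defs
  imports Main "HOL-Library.Multiset"
begin

text \<open>A finite simple graph with vertices from type 'a: a pair (V, E) where V is a finite
  vertex set and E a set of 2-element subsets of V.\<close>

type_synonym 'a graph = "'a set \<times> 'a set set"

definition verts :: "'a graph \<Rightarrow> 'a set" where "verts G = fst G"
definition edges :: "'a graph \<Rightarrow> 'a set set" where "edges G = snd G"

definition simple_graph :: "'a graph \<Rightarrow> bool" where
  "simple_graph G \<longleftrightarrow> finite (verts G) \<and>
     (\<forall>e\<in>edges G. \<exists>x y. x \<in> verts G \<and> y \<in> verts G \<and> x \<noteq> y \<and> e = {x, y})"

definition non_edges :: "'a graph \<Rightarrow> 'a set set" where
  "non_edges G = {{x, y} | x y. x \<in> verts G \<and> y \<in> verts G \<and> x \<noteq> y} - edges G"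

definition graph_iso :: "'a graph \<Rightarrow> 'b graph \<Rightarrow> bool" where
  "graph_iso G H \<longleftrightarrow> (\<exists>f. bij_betw f (verts G) (verts H) \<and>
     (\<forall>x\<in>verts G. \<forall>y\<in>verts G. {x, y} \<in> edges G \<longleftrightarrow> {f x, f y} \<in> edges H))"

text \<open>Isomorphism class (unlabeled graph) among simple graphs on vertex type 'a.\<close>
definition iso_class :: "'a graph \<Rightarrow> 'a graph set" where
  "iso_class G = {H. simple_graph H \<and> graph_iso G H}"

definition edge_delete :: "'a graph \<Rightarrow> 'a set \<Rightarrow> 'a graph" where
  "edge_delete G e = (verts G, edges G - {e})"

definition swap_edges :: "'a graph \<Rightarrow> 'a set set \<Rightarrow> 'a set set \<Rightarrow> 'a graph" where
  "swap_edges G A B = (verts G, (edges G - A) \<union> B)"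

definition edge_deck :: "'a graph \<Rightarrow> 'a graph set multiset" where
  "edge_deck G = image_mset (\<lambda>e. iso_class (edge_delete G e)) (mset_set (edges G))"

definition blocker :: "'a graph \<Rightarrow> 'a graph set multiset \<Rightarrow> 'a graph \<Rightarrow> bool" where
  "blocker G S H \<longleftrightarrow> simple_graph H \<and> \<not> graph_iso H G \<and> S \<subseteq># edge_deck H"

definition reconstructable_from :: "'a graph \<Rightarrow> 'a graph set multiset \<Rightarrow> bool" where
  "reconstructable_from G S \<longleftrightarrow> \<not> (\<exists>H. blocker G S H)"

definition edge_reconstructable :: "'a graph \<Rightarrow> bool" where
  "edge_reconstructable G \<longleftrightarrow> reconstructable_from G (edge_deck G)"

definition ern :: "'a graph \<Rightarrow> nat" where
  "ern G = (LEAST k. \<exists>S. S \<subseteq># edge_deck G \<and> size S = k \<and> reconstructable_from G S)"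

definition connected_graph :: "'a graph \<Rightarrow> bool" where
  "connected_graph G \<longleftrightarrow> (\<forall>x\<in>verts G. \<forall>y\<in>verts G.
     (\<lambda>u v. {u, v} \<in> edges G)\<^sup>*\<^sup>* x y)"

definition regular_graph :: "'a graph \<Rightarrow> bool" where
  "regular_graph G \<longleftrightarrow> (\<exists>k. \<forall>v\<in>verts G. card {u. {u, v} \<in> edges G} = k)"

definition two_swappable :: "'a graph \<Rightarrow> bool" where
  "two_swappable G \<longleftrightarrow> (\<forall>e\<in>edges G. \<exists>A B. A \<subseteq> edges G \<and> B \<subseteq> non_edges G \<and>
     e \<in> A \<and> card A \<le> 2 \<and> graph_iso G (swap_edges G A B))"

definition removal_similar :: "'a graph \<Rightarrow> bool" where
  "removal_similar G \<longleftrightarrow> (\<forall>e\<in>edges G. \<forall>f\<in>edges G.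
     graph_iso (edge_delete G e) (edge_delete G f))"

end

theory Submission
  imports Defs
begin

lemma simple_edgeD:
  assumes "simple_graph G" "{u, v} \<in> edges G"
  shows "u \<in> verts G \<and> v \<in> verts G \<and> u \<noteq> v"
proof -
  obtain x y where "x \<in> verts G" "y \<in> verts G" "x \<noteq> y" "{u, v} = {x, y}"
    using assms unfolding simple_graph_def by blast
  then show ?thesis by (metis doubleton_eq_iff)
qed

lemma simple_edge_sub:
  assumes "simple_graph G" "e \<in> edges G"
  shows "e \<subseteq> verts G"
proof -
  obtain x y where "x \<in> verts G" "y \<in> verts G" "e = {x, y}"
    using assms unfolding simple_graph_def by blast
  then show ?thesis by simp
qed

lemma iso_trans:
  assumes "graph_iso G H" "graph_iso H K" shows "graph_iso G K"
proof -
  obtain f where f: "bij_betw f (verts G) (verts H)"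
    "\<forall>x\<in>verts G. \<forall>y\<in>verts G. {x, y} \<in> edges G \<longleftrightarrow> {f x, f y} \<in> edges H"
    using assms(1) unfolding graph_iso_def by blast
  obtain g where g: "bij_betw g (verts H) (verts K)"
    "\<forall>x\<in>verts H. \<forall>y\<in>verts H. {x, y} \<in> edges H \<longleftrightarrow> {g x, g y} \<in> edges K"
    using assms(2) unfolding graph_iso_def by blast
  have "bij_betw (g \<circ> f) (verts G) (verts K)" using f g bij_betw_trans by blast
  moreover have "\<forall>x\<in>verts G. \<forall>y\<in>verts G. {x, y} \<in> edges G \<longleftrightarrow> {(g\<circ>f) x, (g\<circ>f) y} \<in> edges K"
    using f g bij_betwE[OF f(1)] by auto
  ultimately show ?thesis unfolding graph_iso_def by blast
qed

lemma iso_sym: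
  assumes "graph_iso G H" shows "graph_iso H G"
proof -
  obtain f where f: "bij_betw f (verts G) (verts H)"
    "\<forall>x\<in>verts G. \<forall>y\<in>verts G. {x, y} \<in> edges G \<longleftrightarrow> {f x, f y} \<in> edges H"
    using assms(1) unfolding graph_iso_def by blast
  define g where "g = inv_into (verts G) f"
  have g: "bij_betw g (verts H) (verts G)" using f(1) bij_betw_inv_into g_def by blast
  have "\<forall>x\<in>verts H. \<forall>y\<in>verts H. {x, y} \<in> edges H \<longleftrightarrow> {g x, g y} \<in> edges G"
  proof (intro ballI)
    fix x y assume "x \<in> verts H" "y \<in> verts H"
    then have "g x \<in> verts G" "g y \<in> verts G" "f (g x) = x" "f (g y) = y"
      using g f(1) bij_betwE g_def bij_betw_inv_into_right by fastforce+
    then show "{x, y} \<in> edges H \<longleftrightarrow> {g x, g y} \<in> edges G" using f(2) by metis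
  qed
  then show ?thesis using g unfolding graph_iso_def by blast
qed

lemma iso_class_eq:
  assumes "graph_iso X Y" shows "iso_class X = iso_class Y"
  unfolding iso_class_def using assms iso_trans iso_sym by blast

lemma iso_card_edges:
  assumes "simple_graph G" "simple_graph K" "graph_iso G K"
  shows "card (edges G) = card (edges K)"
proof -
  obtain f where f1: "bij_betw f (verts G) (verts K)"
    and f2: "\<forall>x\<in>verts G. \<forall>y\<in>verts G. {x, y} \<in> edges G \<longleftrightarrow> {f x, f y} \<in> edges K"
    using assms(3) unfolding graph_iso_def by blast
  have inj: "inj_on f (verts G)" using f1 by (rule bij_betw_imp_inj_on)
  have img: "f ` verts G = verts K" using f1 by (rule bij_betw_imp_surj_on)
  have sub: "\<And>e. e \<in> edges G \<Longrightarrow> e \<subseteq> verts G" using simple_edge_sub[OF assms(1)] .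
  have "inj_on ((`) f) (edges G)"
  proof (rule inj_onI)
    fix a b assume ab: "a \<in> edges G" "b \<in> edges G" "f ` a = f ` b"
    have "a \<subseteq> verts G" "b \<subseteq> verts G" using sub ab by auto
    then show "a = b" using inj_on_image_eq_iff[OF inj] ab(3) by blast
  qed
  moreover have "(`) f ` edges G = edges K"
  proof
    show "(`) f ` edges G \<subseteq> edges K"
    proof
      fix e' assume "e' \<in> (`) f ` edges G"
      then obtain e where e: "e \<in> edges G" "e' = f ` e" by blast
      then obtain x y where xy: "x \<in> verts G" "y \<in> verts G" "e = {x, y}"
        using assms(1) unfolding simple_graph_def by blast
      have "{f x, f y} \<in> edges K" using f2 xy e(1) by blast
      moreover have "e' = {f x, f y}" using e(2) xy(3) by simp
      ultimately show "e' \<in> edges K" by simp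
    qed
  next
    show "edges K \<subseteq> (`) f ` edges G"
    proof
      fix e' assume e': "e' \<in> edges K"
      then obtain x' y' where xy: "x' \<in> verts K" "y' \<in> verts K" "e' = {x', y'}"
        using assms(2) unfolding simple_graph_def by blast
      obtain x where x: "x \<in> verts G" "x' = f x" using xy(1) img by blast
      obtain y where y: "y \<in> verts G" "y' = f y" using xy(2) img by blast
      have "{f x, f y} \<in> edges K" using e' xy(3) x(2) y(2) by simp
      then have "{x, y} \<in> edges G" using f2 x(1) y(1) by blast
      moreover have "e' = f ` {x, y}" using xy(3) x(2) y(2) by simp
      ultimately show "e' \<in> (`) f ` edges G" by blast
    qed
  qed
  ultimately show ?thesis using card_image[of "(`) f" "edges G"] by simp
qed

lemma iso_degree:
  assumes "simple_graph K" "simple_graph G"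
    and f: "bij_betw f (verts K) (verts G)"
    "\<forall>x\<in>verts K. \<forall>y\<in>verts K. {x, y} \<in> edges K \<longleftrightarrow> {f x, f y} \<in> edges G"
    and v: "v \<in> verts K"
  shows "card {u. {u, v} \<in> edges K} = card {w. {w, f v} \<in> edges G}"
proof -
  have sub: "{u. {u, v} \<in> edges K} \<subseteq> verts K" using simple_edgeD[OF assms(1)] by blast
  have "inj_on f {u. {u, v} \<in> edges K}"
    using inj_on_subset[OF bij_betw_imp_inj_on[OF f(1)] sub] .
  moreover have "f ` {u. {u, v} \<in> edges K} = {w. {w, f v} \<in> edges G}"
  proof
    show "f ` {u. {u, v} \<in> edges K} \<subseteq> {w. {w, f v} \<in> edges G}"
    proof
      fix w assume "w \<in> f ` {u. {u, v} \<in> edges K}"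
      then obtain u where u: "{u, v} \<in> edges K" "w = f u" by blast
      then have "u \<in> verts K" using sub by blast
      then show "w \<in> {w. {w, f v} \<in> edges G}" using f(2) v u by blast
    qed
  next
    show "{w. {w, f v} \<in> edges G} \<subseteq> f ` {u. {u, v} \<in> edges K}"
    proof
      fix w assume "w \<in> {w. {w, f v} \<in> edges G}"
      then have w: "{w, f v} \<in> edges G" by simp
      then have "w \<in> verts G" using simple_edgeD[OF assms(2)] by blast
      moreover have "f ` verts K = verts G" using f(1) unfolding bij_betw_def by blast
      ultimately obtain u where u: "u \<in> verts K" "w = f u" by blast
      then have "{u, v} \<in> edges K" using f(2) v w by blast
      then show "w \<in> f ` {u. {u, v} \<in> edges K}" using u by blast
    qed
  qed
  ultimately show ?thesis using card_image[of f "{u. {u, v} \<in> edges K}"] by simp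
qed

lemma swap_simple:
  assumes "simple_graph G" "B \<subseteq> non_edges G"
  shows "simple_graph (swap_edges G A B)"
  unfolding simple_graph_def
proof (intro conjI ballI)
  have V: "verts (swap_edges G A B) = verts G" "edges (swap_edges G A B) = (edges G - A) \<union> B"
    by (simp_all add: swap_edges_def verts_def edges_def)
  show "finite (verts (swap_edges G A B))" using assms(1) V unfolding simple_graph_def by simp
  fix e assume "e \<in> edges (swap_edges G A B)"
  then have "e \<in> edges G \<or> e \<in> B" using V by blast
  then show "\<exists>x y. x \<in> verts (swap_edges G A B) \<and> y \<in> verts (swap_edges G A B) \<and> x \<noteq> y \<and> e = {x, y}"
  proof
    assume "e \<in> edges G" then show ?thesis using assms(1) V unfolding simple_graph_def by simp
  next
    assume "e \<in> B" then have "e \<in> non_edges G" using assms(2) by blast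
    then show ?thesis using V unfolding non_edges_def by blast
  qed
qed

lemma not_iso_swap:
  assumes sG: "simple_graph G" and reg: "\<forall>v\<in>verts G. card {u. {u, v} \<in> edges G} = k"
    and e: "e \<in> edges G" and b: "b \<in> non_edges G"
  shows "\<not> graph_iso (swap_edges G {e} {b}) G"
proof
  let ?H = "swap_edges G {e} {b}"
  assume iso: "graph_iso ?H G"
  have sH: "simple_graph ?H" using swap_simple[OF sG] b by auto
  obtain x y where xy: "x \<in> verts G" "y \<in> verts G" "x \<noteq> y" "e = {x, y}"
    using sG e unfolding simple_graph_def by blast
  obtain p q where pq: "b = {p, q}" using b unfolding non_edges_def by blast
  have bne: "b \<noteq> e" using b e unfolding non_edges_def by blast
  obtain v w where vw: "v \<in> verts G" "v \<notin> b" "e = {v, w}" "v \<noteq> w"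
  proof (cases "x \<in> b")
    case True
    then have "y \<notin> b" using xy pq bne by auto
    then show ?thesis using that xy by (metis insert_commute)
  next
    case False then show ?thesis using that xy by blast
  qed
  have EH: "edges ?H = (edges G - {e}) \<union> {b}" by (simp add: swap_edges_def edges_def)
  have VH: "verts ?H = verts G" by (simp add: swap_edges_def verts_def)
  have set: "{u. {u, v} \<in> edges ?H} = {u. {u, v} \<in> edges G} - {w}"
  proof -
    have "{u, v} \<noteq> b" for u using vw(2) by auto
    moreover have "{u, v} = e \<longleftrightarrow> u = w" for u using vw(3,4) by (metis doubleton_eq_iff)
    ultimately show ?thesis using EH by auto
  qed
  have fin: "finite {u. {u, v} \<in> edges G}"
  proof -
    have "{u. {u, v} \<in> edges G} \<subseteq> verts G" using simple_edgeD[OF sG] by blast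
    then show ?thesis using sG unfolding simple_graph_def using finite_subset by blast
  qed
  have win: "w \<in> {u. {u, v} \<in> edges G}" using e vw by (simp add: insert_commute)
  have degv: "card {u. {u, v} \<in> edges ?H} = k - 1" using set fin win reg vw(1) by simp
  have "card {u. {u, v} \<in> edges G} > 0" using fin win card_gt_0_iff by blast
  then have kpos: "k \<ge> 1" using reg vw(1) by simp
  obtain f where f: "bij_betw f (verts ?H) (verts G)"
    "\<forall>x\<in>verts ?H. \<forall>y\<in>verts ?H. {x, y} \<in> edges ?H \<longleftrightarrow> {f x, f y} \<in> edges G"
    using iso unfolding graph_iso_def by blast
  have "card {u. {u, v} \<in> edges ?H} = card {u. {u, f v} \<in> edges G}"
    using iso_degree[OF sH sG f] vw(1) VH by auto
  also have "\<dots> = k" using reg f(1) vw(1) VH by (metis bij_betwE)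
  finally show False using degv kpos by simp
qed

lemma simple_edgeE:
  assumes "simple_graph G" "e \<in> edges G"
  obtains x y where "x \<in> verts G" "y \<in> verts G" "x \<noteq> y" "e = {x, y}"
  using assms unfolding simple_graph_def by blast

lemma iso_delete:
  assumes sG: "simple_graph G" "simple_graph K" and iso: "graph_iso G K" and b: "b \<in> edges K"
  shows "\<exists>g\<in>edges G. graph_iso (edge_delete G g) (edge_delete K b)"
proof -
  obtain f where f1: "bij_betw f (verts G) (verts K)"
    and f2: "\<forall>x\<in>verts G. \<forall>y\<in>verts G. {x, y} \<in> edges G \<longleftrightarrow> {f x, f y} \<in> edges K"
    using iso unfolding graph_iso_def by blast
  have inj: "inj_on f (verts G)" using f1 by (rule bij_betw_imp_inj_on)
  have img: "f ` verts G = verts K" using f1 by (rule bij_betw_imp_surj_on)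
  obtain x' y' where xy': "x' \<in> verts K" "y' \<in> verts K" "b = {x', y'}"
    using simple_edgeE[OF sG(2) b] by metis
  obtain x where x: "x \<in> verts G" "x' = f x" using xy'(1) img by blast
  obtain y where y: "y \<in> verts G" "y' = f y" using xy'(2) img by blast
  have bb: "b = {f x, f y}" using xy'(3) x y by simp
  have g: "{x, y} \<in> edges G" using f2 x(1) y(1) b bb by blast
  have eqv: "({u, v} = {x, y}) \<longleftrightarrow> ({f u, f v} = {f x, f y})"
    if uv: "u \<in> verts G" "v \<in> verts G" for u v
  proof -
    have "f u = f x \<longleftrightarrow> u = x" "f u = f y \<longleftrightarrow> u = y" "f v = f x \<longleftrightarrow> v = x" "f v = f y \<longleftrightarrow> v = y"
      using inj_on_eq_iff[OF inj] uv x(1) y(1) by auto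
    then show ?thesis unfolding doubleton_eq_iff by simp
  qed
  have key: "\<forall>u\<in>verts G. \<forall>v\<in>verts G. ({u, v} \<in> edges G - {{x, y}}) \<longleftrightarrow> ({f u, f v} \<in> edges K - {b})"
  proof (intro ballI)
    fix u v assume uv: "u \<in> verts G" "v \<in> verts G"
    have "{u, v} \<in> edges G \<longleftrightarrow> {f u, f v} \<in> edges K" using f2 uv by blast
    then show "({u, v} \<in> edges G - {{x, y}}) \<longleftrightarrow> ({f u, f v} \<in> edges K - {b})"
      using eqv[OF uv] bb by blast
  qed
  have V: "verts (edge_delete G {x, y}) = verts G" "verts (edge_delete K b) = verts K"
    "edges (edge_delete G {x, y}) = edges G - {{x, y}}" "edges (edge_delete K b) = edges K - {b}"
    by (simp_all add: edge_delete_def verts_def edges_def)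
  have "graph_iso (edge_delete G {x, y}) (edge_delete K b)"
    unfolding graph_iso_def V using f1 key by blast
  then show ?thesis using g by blast
qed

theorem mainTheorem2:
  fixes G :: "'a graph"
  assumes "simple_graph G"
    and "connected_graph G"
    and "regular_graph G"
    and "edges G \<noteq> {}"
    and "edge_reconstructable G"
    and "two_swappable G"
    and "removal_similar G"
  shows "ern G \<ge> 3"
proof -
  note sG = assms(1)
  obtain k where reg: "\<forall>v\<in>verts G. card {u. {u, v} \<in> edges G} = k"
    using assms(3) unfolding regular_graph_def by blast
  obtain e where e: "e \<in> edges G" using assms(4) by blast
  define C where "C = iso_class (edge_delete G e)"
  have finE: "finite (edges G)"
  proof -
    have "edges G \<subseteq> Pow (verts G)" using simple_edge_sub[OF sG] by blast
    moreover have "finite (verts G)" using sG unfolding simple_graph_def by simp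
    ultimately show ?thesis by (meson finite_Pow_iff finite_subset)
  qed
  have cards: "\<forall>e'\<in>edges G. iso_class (edge_delete G e') = C"
  proof
    fix e' assume "e' \<in> edges G"
    then have "graph_iso (edge_delete G e') (edge_delete G e)"
      using assms(7) e unfolding removal_similar_def by blast
    then show "iso_class (edge_delete G e') = C" unfolding C_def by (rule iso_class_eq)
  qed
  have deck: "edge_deck G = replicate_mset (card (edges G)) C"
  proof -
    have "edge_deck G = image_mset (\<lambda>_. C) (mset_set (edges G))"
      unfolding edge_deck_def using cards finE by (intro image_mset_cong) auto
    moreover have "image_mset (\<lambda>_. C) M = replicate_mset (size M) C" for M :: "'a set multiset"
      by (induct M) simp_all
    ultimately show ?thesis using finE by simp
  qed
  obtain A B where AB: "A \<subseteq> edges G" "B \<subseteq> non_edges G" "e \<in> A" "card A \<le> 2"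
     "graph_iso G (swap_edges G A B)"
  proof -
    have "\<exists>A B. A \<subseteq> edges G \<and> B \<subseteq> non_edges G \<and> e \<in> A \<and> card A \<le> 2 \<and> graph_iso G (swap_edges G A B)"
      using assms(6) e unfolding two_swappable_def by (rule bspec)
    then show ?thesis by (elim exE conjE) (rule that; assumption)
  qed
  let ?K = "swap_edges G A B"
  have sK: "simple_graph ?K" using swap_simple[OF sG AB(2)] .
  have finB: "finite B"
  proof -
    have "non_edges G \<subseteq> Pow (verts G)" unfolding non_edges_def by auto
    moreover have "finite (verts G)" using sG unfolding simple_graph_def by simp
    ultimately show ?thesis using AB(2) by (meson finite_Pow_iff finite_subset)
  qed
  have BE: "B \<inter> edges G = {}" using AB(2) unfolding non_edges_def by auto
  have finA: "finite A" using AB(1) finE finite_subset by blast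
  have "edges ?K = (edges G - A) \<union> B" by (simp add: swap_edges_def edges_def)
  moreover have "(edges G - A) \<inter> B = {}" using BE by blast
  moreover have "finite (edges G - A)" using finE by simp
  ultimately have "card (edges ?K) = card (edges G - A) + card B"
    using card_Un_disjoint[of "edges G - A" B] finB by simp
  moreover have "card (edges G - A) = card (edges G) - card A" using AB(1) finA by (simp add: card_Diff_subset)
  moreover have "card (edges ?K) = card (edges G)" using iso_card_edges[OF sG sK AB(5)] by simp
  moreover have "card A \<le> card (edges G)" using AB(1) finE card_mono by blast
  ultimately have cAB: "card B = card A" by linarith
  have "card A > 0" using AB(3) finA card_gt_0_iff by blast
  then have cA: "card A = 1 \<or> card A = 2" using AB(4) by linarith
  have key: "\<exists>H. simple_graph H \<and> \<not> graph_iso H G \<and> {#C, C#} \<subseteq># edge_deck H"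
  proof (cases "card A = 1")
    case True
    then obtain a where "A = {a}" by (rule card_1_singletonE)
    then have A: "A = {e}" using AB(3) by simp
    have "card B = 1" using True cAB by simp
    then obtain b where B: "B = {b}" by (rule card_1_singletonE)
    have "\<not> graph_iso ?K G" using not_iso_swap[OF sG reg e] AB(2) A B by auto
    then show ?thesis using iso_sym AB(5) by blast
  next
    case False
    then have "card A = 2" using cA by simp
    then obtain x y where xy: "A = {x, y}" "x \<noteq> y" unfolding card_2_iff by blast
    obtain f where A: "A = {e, f}" "f \<noteq> e"
    proof (cases "e = x")
      case True then show ?thesis using that xy by blast
    next
      case False then have "e = y" using AB(3) xy by blast
      then show ?thesis using that xy by (metis insert_commute)
    qed
    have "card B = 2" using cAB \<open>card A = 2\<close> by simp
    then obtain b1 b2 where B: "B = {b1, b2}" "b1 \<noteq> b2" unfolding card_2_iff by blast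
    define H where "H = swap_edges G {e} {b1}"
    have b1: "b1 \<in> non_edges G" using AB(2) B by auto
    have f: "f \<in> edges G" using AB(1) A by auto
    have "{b1} \<subseteq> non_edges G" using b1 by simp
    then have sH: "simple_graph H" unfolding H_def by (rule swap_simple[OF sG])
    have niso: "\<not> graph_iso H G" unfolding H_def using not_iso_swap[OF sG reg e b1] .
    have b1E: "b1 \<notin> edges G" using b1 unfolding non_edges_def by (rule DiffE)
    have EH: "edges H = (edges G - {e}) \<union> {b1}" by (simp add: H_def swap_edges_def edges_def)
    have VH: "verts H = verts G" by (simp add: H_def swap_edges_def verts_def)
    have c1: "iso_class (edge_delete H b1) = C"
    proof -
      have "edges H - {b1} = edges G - {e}" unfolding EH using b1E by blast
      then have "edge_delete H b1 = edge_delete G e"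
        unfolding edge_delete_def using VH by (simp add: verts_def edges_def)
      then show ?thesis using C_def by simp
    qed
    have c2: "iso_class (edge_delete H f) = C"
    proof -
      have EK0: "edges ?K = (edges G - A) \<union> B" by (simp add: swap_edges_def edges_def)
      have EK: "edges ?K = (edges G - {e, f}) \<union> {b1, b2}" using EK0 by (simp only: A(1) B(1))
      have "b2 \<in> non_edges G" using AB(2) B by auto
      then have b2E: "b2 \<notin> edges G" unfolding non_edges_def by (rule DiffE)
      have "edges H - {f} = edges ?K - {b2}" unfolding EH EK using B(2) b1E b2E f by blast
      moreover have "verts ?K = verts G" by (simp add: swap_edges_def verts_def)
      ultimately have "edge_delete H f = edge_delete ?K b2"
        unfolding edge_delete_def using VH by (simp add: verts_def edges_def)
      moreover have "b2 \<in> edges ?K" using B by (simp add: swap_edges_def edges_def)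
      then obtain g where "g \<in> edges G" "graph_iso (edge_delete G g) (edge_delete ?K b2)"
        using iso_delete[OF sG sK AB(5)] by blast
      moreover have "iso_class (edge_delete G g) = C" using cards \<open>g \<in> edges G\<close> by blast
      moreover have "iso_class (edge_delete G g) = iso_class (edge_delete ?K b2)"
        using \<open>graph_iso (edge_delete G g) (edge_delete ?K b2)\<close> by (rule iso_class_eq)
      ultimately show ?thesis by simp
    qed
    have finH: "finite (edges H)" using EH finE by simp
    have sub: "{b1, f} \<subseteq> edges H" using EH f A by auto
    have HU: "edges H = {b1, f} \<union> (edges H - {b1, f})" using sub by blast
    have "mset_set (edges H) = mset_set ({b1, f} \<union> (edges H - {b1, f}))"
      using HU by (rule arg_cong)
    also have "\<dots> = mset_set {b1, f} + mset_set (edges H - {b1, f})"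
      by (rule mset_set_Union) (use finH in auto)
    finally have MH: "mset_set (edges H) = mset_set {b1, f} + mset_set (edges H - {b1, f})" .
    have bf: "b1 \<noteq> f" using b1E f by blast
    have "mset_set {b1, f} = {#b1, f#}" using bf by simp
    then have "edge_deck H = {#C, C#} + image_mset (\<lambda>e. iso_class (edge_delete H e)) (mset_set (edges H - {b1, f}))"
      unfolding edge_deck_def MH using c1 c2 by simp
    then have "{#C, C#} \<subseteq># edge_deck H" by simp
    then show ?thesis using sH niso by blast
  qed
  then obtain H where H: "simple_graph H" "\<not> graph_iso H G" "{#C, C#} \<subseteq># edge_deck H" by blast
  let ?P = "\<lambda>k. \<exists>S. S \<subseteq># edge_deck G \<and> size S = k \<and> reconstructable_from G S"
  have ex: "?P (size (edge_deck G))" using assms(5) unfolding edge_reconstructable_def by blast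
  have all: "?P k' \<Longrightarrow> k' \<ge> 3" for k'
  proof (rule ccontr)
    assume "?P k'" "\<not> k' \<ge> 3"
    then obtain S where S: "S \<subseteq># edge_deck G" "size S = k'" "reconstructable_from G S" "k' \<le> 2" by auto
    have "set_mset S \<subseteq> set_mset (edge_deck G)" using S(1) by (rule set_mset_mono)
    moreover have "set_mset (edge_deck G) \<subseteq> {C}" unfolding deck by simp
    ultimately have "set_mset S \<subseteq> {C}" by (rule order_trans)
    then have "S = replicate_mset (size S) C" by (rule set_mset_subset_singletonD)
    then have "S = replicate_mset k' C" using S(2) by simp
    then have "S \<subseteq># replicate_mset 2 C" using S(4) by (simp add: replicate_mset_msubseteq_iff)
    moreover have "replicate_mset 2 C = {#C, C#}" by (simp add: numeral_2_eq_2)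
    ultimately have "S \<subseteq># edge_deck H" using H(3) subset_mset.order_trans by metis
    then have "blocker G S H" using H unfolding blocker_def by blast
    then show False using S(3) unfolding reconstructable_from_def by blast
  qed
  have "?P (LEAST k. ?P k)" using ex by (rule LeastI)
  then show ?thesis unfolding ern_def by (rule all)
qed

end
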